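(* Let $r_2\geq 4$ be an even integer. Then there is no graph with parameters $(r_2,r_3)$ for any integer $r_3$ with $4\binom{r_2/2}{2}<r_3<\binom{r_2}{2}$ or $\binom{r_2-1}{2}<r_3<4\binom{r_2/2}{2}$. Moreover, $K_{r_2+1}$ has parameters $(r_2,\binom{r_2}{2})$, $\operatorname{Turan}(r_2+2, r_2/2+1)$ has parameters $(r_2, 4\binom{r_2/2}{2})$, and $K_{r_2}\square K_2$ has parameters $(r_2,\binom{r_2-1}{2})$.
   Context: All graphs are finite, simple and undirected. The $K_3$-degree of a vertex $v$ is the number of triangles containing $v$. A graph $G$ has parameters $(r_2,r_3)$ if every vertex has degree $r_2$ and every vertex has $K_3$-degree $r_3$. $K_n$ is the complete graph on $n$ vertices. For $r\mid n$, $\operatorname{Turan}(n,r)$ is the complete multipartite graph on $n$ vertices with $r$ parts each of size $n/r$. The Cartesian product $G_1\square G_2$ has vertex set $V(G_1)\times V(G_2)$, with $(u,v)$ and $(u',v')$ adjacent iff either $u=u'$ and $vv'\in E(G_2)$, or $v=v'$ and $uu'\in E(G_1)$. *)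

theory Defs
  imports Main
begin

type_synonym 'a graph = "'a set \<times> ('a \<Rightarrow> 'a \<Rightarrow> bool)"

definition simple_graph :: "'a graph \<Rightarrow> bool" where
  "simple_graph G \<longleftrightarrow> finite (fst G)
     \<and> (\<forall>u v. snd G u v \<longrightarrow> u \<in> fst G \<and> v \<in> fst G)
     \<and> (\<forall>u v. snd G u v \<longrightarrow> snd G v u)
     \<and> (\<forall>v. \<not> snd G v v)"

definition degree :: "'a graph \<Rightarrow> 'a \<Rightarrow> nat" where
  "degree G v = card {u \<in> fst G. snd G v u}"

definition triangles :: "'a graph \<Rightarrow> 'a set set" where
  "triangles G = {T. T \<subseteq> fst G \<and> card T = 3 \<and> (\<forall>u\<in>T. \<forall>w\<in>T. u \<noteq> w \<longrightarrow> snd G u w)}"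

definition k3_degree :: "'a graph \<Rightarrow> 'a \<Rightarrow> nat" where
  "k3_degree G v = card {T \<in> triangles G. v \<in> T}"

definition has_params :: "'a graph \<Rightarrow> nat \<Rightarrow> nat \<Rightarrow> bool" where
  "has_params G r2 r3 \<longleftrightarrow> (\<forall>v\<in>fst G. degree G v = r2 \<and> k3_degree G v = r3)"

definition complete_graph :: "nat \<Rightarrow> nat graph" where
  "complete_graph n = ({0..<n}, \<lambda>i j. i < n \<and> j < n \<and> i \<noteq> j)"

text \<open>Turan n r: complete r-partite graph on {0..<n}; the parts are the residue
  classes mod r, each of size n/r when r divides n.\<close>
definition turan :: "nat \<Rightarrow> nat \<Rightarrow> nat graph" where
  "turan n r = ({0..<n}, \<lambda>i j. i < n \<and> j < n \<and> i mod r \<noteq> j mod r)"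

definition cart_prod :: "'a graph \<Rightarrow> 'b graph \<Rightarrow> ('a \<times> 'b) graph" where
  "cart_prod G1 G2 = (fst G1 \<times> fst G2,
     \<lambda>(u, v) (u', v'). u \<in> fst G1 \<and> u' \<in> fst G1 \<and> v \<in> fst G2 \<and> v' \<in> fst G2 \<and>
        ((u = u' \<and> snd G2 v v') \<or> (v = v' \<and> snd G1 u u')))"

end

theory Submission
  imports Defs
begin


definition nb :: "'a graph \<Rightarrow> 'a \<Rightarrow> 'a set" where
  "nb G v = {u \<in> fst G. snd G v u}"

definition NP :: "'a graph \<Rightarrow> 'a \<Rightarrow> ('a \<times> 'a) set" where
  "NP G w = Sigma (nb G w) (\<lambda>a. nb G w - nb G a - {a})"

lemma sg_fin: "simple_graph G \<Longrightarrow> finite (fst G)"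
  by (simp add: simple_graph_def)
lemma sg_in: "simple_graph G \<Longrightarrow> snd G u v \<Longrightarrow> u \<in> fst G \<and> v \<in> fst G"
  by (simp add: simple_graph_def)
lemma sg_sym: "simple_graph G \<Longrightarrow> snd G u v \<Longrightarrow> snd G v u"
  by (simp add: simple_graph_def)
lemma sg_irr: "simple_graph G \<Longrightarrow> \<not> snd G v v"
  by (simp add: simple_graph_def)

lemma nb_iff: "simple_graph G \<Longrightarrow> a \<in> nb G v \<longleftrightarrow> snd G v a"
  using sg_in unfolding nb_def by fastforce
lemma nb_sym: "simple_graph G \<Longrightarrow> a \<in> nb G v \<longleftrightarrow> v \<in> nb G a"
  using nb_iff sg_sym by metis
lemma nb_irr: "simple_graph G \<Longrightarrow> v \<notin> nb G v"
  using nb_iff sg_irr by metis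
lemma nb_fin: "simple_graph G \<Longrightarrow> finite (nb G v)"
  unfolding nb_def using sg_fin[of G] by auto
lemma nb_sub: "nb G v \<subseteq> fst G"
  unfolding nb_def by auto
lemma degree_nb: "degree G v = card (nb G v)"
  by (simp add: degree_def nb_def)

lemma tri_bij:
  assumes sg: "simple_graph G" and a: "a \<in> nb G v"
  shows "card (nb G v \<inter> nb G a) = card {T \<in> triangles G. v \<in> T \<and> a \<in> T}"
proof -
  have av: "v \<noteq> a" using a nb_irr[OF sg] by auto
  have vV: "v \<in> fst G" using a nb_iff[OF sg] sg_in[OF sg] by metis
  have aV: "a \<in> fst G" using a nb_sub[of G v] by blast
  have inj: "inj_on (\<lambda>y. {v,a,y}) (nb G v \<inter> nb G a)"
  proof (rule inj_onI)
    fix y y' assume y: "y \<in> nb G v \<inter> nb G a" and y': "y' \<in> nb G v \<inter> nb G a"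
      and eq: "{v,a,y} = {v,a,y'}"
    have "y \<noteq> v" "y \<noteq> a" using y nb_irr[OF sg] by auto
    then show "y = y'" using eq by blast
  qed
  have img: "(\<lambda>y. {v,a,y}) ` (nb G v \<inter> nb G a) = {T \<in> triangles G. v \<in> T \<and> a \<in> T}"
  proof
    show "(\<lambda>y. {v,a,y}) ` (nb G v \<inter> nb G a) \<subseteq> {T \<in> triangles G. v \<in> T \<and> a \<in> T}"
    proof
      fix T assume "T \<in> (\<lambda>y. {v,a,y}) ` (nb G v \<inter> nb G a)"
      then obtain y where y: "y \<in> nb G v" "y \<in> nb G a" and T: "T = {v,a,y}" by blast
      have "y \<noteq> v" "y \<noteq> a" using y nb_irr[OF sg] by auto
      have yV: "y \<in> fst G" using y nb_sub[of G v] by blast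
      have "snd G v a" "snd G v y" "snd G a y" using a y nb_iff[OF sg] by auto
      then have adj: "snd G a v" "snd G y v" "snd G y a" using sg_sym[OF sg] by auto
      have "card T = 3" using T av \<open>y \<noteq> v\<close> \<open>y \<noteq> a\<close> by auto
      moreover have "T \<subseteq> fst G" using T vV aV yV by auto
      moreover have "\<forall>p\<in>T. \<forall>q\<in>T. p \<noteq> q \<longrightarrow> snd G p q"
        using T adj \<open>snd G v a\<close> \<open>snd G v y\<close> \<open>snd G a y\<close> by blast
      ultimately show "T \<in> {T \<in> triangles G. v \<in> T \<and> a \<in> T}"
        using T by (auto simp: triangles_def)
    qed
  next
    show "{T \<in> triangles G. v \<in> T \<and> a \<in> T} \<subseteq> (\<lambda>y. {v,a,y}) ` (nb G v \<inter> nb G a)"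
    proof
      fix T assume T: "T \<in> {T \<in> triangles G. v \<in> T \<and> a \<in> T}"
      then have c3: "card T = 3" and TV: "T \<subseteq> fst G"
        and adj: "\<forall>p\<in>T. \<forall>q\<in>T. p \<noteq> q \<longrightarrow> snd G p q" and vT: "v \<in> T" and aT: "a \<in> T"
        by (auto simp: triangles_def)
      have fT: "finite T" using c3 by (metis card.infinite zero_neq_numeral)
      have "card (T - {v,a}) = 1" using c3 vT aT av fT by (simp add: card_Diff_subset)
      then obtain y where y: "T - {v,a} = {y}" using card_1_singletonE by blast
      then have yT: "y \<in> T" "y \<noteq> v" "y \<noteq> a" by auto
      have Teq: "T = {v,a,y}" using y vT aT by blast
      have "snd G v y" "snd G a y" using adj yT vT aT by (metis, metis)
      then have "y \<in> nb G v" "y \<in> nb G a" using nb_iff[OF sg] by auto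
      then show "T \<in> (\<lambda>y. {v,a,y}) ` (nb G v \<inter> nb G a)" using Teq by blast
    qed
  qed
  show ?thesis using card_image[OF inj] img by simp
qed


lemma card_filter_sum: "finite B \<Longrightarrow> card {T\<in>B. P T} = (\<Sum>T\<in>B. if P T then 1 else 0)"
  by (simp add: sum.If_cases Int_def)

lemma sum_swap_count:
  assumes "finite A" "finite B"
  shows "(\<Sum>a\<in>A. card {T\<in>B. a \<in> T}) = (\<Sum>T\<in>B. card {a\<in>A. a \<in> T})"
proof -
  have "(\<Sum>a\<in>A. card {T\<in>B. a \<in> T}) = (\<Sum>a\<in>A. \<Sum>T\<in>B. if a \<in> T then 1 else 0)"
    using assms by (simp add: card_filter_sum)
  also have "\<dots> = (\<Sum>T\<in>B. \<Sum>a\<in>A. if a \<in> T then 1 else 0)" by (rule sum.swap)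
  also have "\<dots> = (\<Sum>T\<in>B. card {a\<in>A. a \<in> T})"
    using assms by (simp add: card_filter_sum)
  finally show ?thesis .
qed

lemma k3_sum:
  assumes sg: "simple_graph G" and vV: "v \<in> fst G"
  shows "2 * k3_degree G v = (\<Sum>a\<in>nb G v. card (nb G v \<inter> nb G a))"
proof -
  define K where "K = {T \<in> triangles G. v \<in> T}"
  have finK: "finite K"
  proof -
    have "K \<subseteq> Pow (fst G)" unfolding K_def triangles_def by auto
    then show ?thesis using sg_fin[OF sg] finite_subset by blast
  qed
  have "(\<Sum>a\<in>nb G v. card (nb G v \<inter> nb G a)) = (\<Sum>a\<in>nb G v. card {T\<in>K. a \<in> T})"
    by (rule sum.cong) (auto simp: tri_bij[OF sg] K_def)
  also have "\<dots> = (\<Sum>T\<in>K. card {a\<in>nb G v. a \<in> T})"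
    using sum_swap_count[OF nb_fin[OF sg] finK] .
  also have "\<dots> = (\<Sum>T\<in>K. 2)"
  proof (rule sum.cong)
    fix T assume T: "T \<in> K"
    then have c3: "card T = 3" and TV: "T \<subseteq> fst G"
      and adj: "\<forall>p\<in>T. \<forall>q\<in>T. p \<noteq> q \<longrightarrow> snd G p q" and vT: "v \<in> T"
      by (auto simp: triangles_def K_def)
    have "{a\<in>nb G v. a \<in> T} = T - {v}"
    proof
      show "{a\<in>nb G v. a \<in> T} \<subseteq> T - {v}" using nb_irr[OF sg, of v] by blast
      show "T - {v} \<subseteq> {a\<in>nb G v. a \<in> T}"
      proof
        fix a assume a: "a \<in> T - {v}"
        then have "a \<in> T" "v \<noteq> a" by auto
        then have "snd G v a" using adj vT by simp
        then show "a \<in> {a\<in>nb G v. a \<in> T}" using a nb_iff[OF sg] by blast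
      qed
    qed
    moreover have "finite T" using c3 by (metis card.infinite zero_neq_numeral)
    ultimately show "card {a\<in>nb G v. a \<in> T} = 2" using c3 vT by simp
  qed simp
  also have "\<dots> = 2 * card K" by simp
  finally show ?thesis unfolding k3_degree_def K_def by simp
qed

lemma NP_sum:
  assumes sg: "simple_graph G"
  shows "card (NP G v) = (\<Sum>a\<in>nb G v. card (nb G v - nb G a - {a}))"
  unfolding NP_def using nb_fin[OF sg] by (simp add: card_SigmaI)

lemma NP_card:
  assumes sg: "simple_graph G" and vV: "v \<in> fst G"
  shows "card (NP G v) + 2 * k3_degree G v = card (nb G v) * (card (nb G v) - 1)"
proof -
  have fin: "finite (nb G v)" using nb_fin[OF sg] .
  have un: "Sigma (nb G v) (\<lambda>a. nb G v - {a}) = NP G v \<union> Sigma (nb G v) (\<lambda>a. nb G v \<inter> nb G a)"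
    unfolding NP_def using nb_irr[OF sg] by blast
  have dis: "NP G v \<inter> Sigma (nb G v) (\<lambda>a. nb G v \<inter> nb G a) = {}"
    unfolding NP_def by blast
  have f1: "finite (NP G v)" unfolding NP_def using fin by auto
  have f2: "finite (Sigma (nb G v) (\<lambda>a. nb G v \<inter> nb G a))" using fin by auto
  have "card (Sigma (nb G v) (\<lambda>a. nb G v - {a})) = (\<Sum>a\<in>nb G v. card (nb G v) - 1)"
    using fin by (simp add: card_SigmaI)
  also have "\<dots> = card (nb G v) * (card (nb G v) - 1)" by simp
  finally have L: "card (Sigma (nb G v) (\<lambda>a. nb G v - {a})) = card (nb G v) * (card (nb G v) - 1)" .
  have "card (Sigma (nb G v) (\<lambda>a. nb G v \<inter> nb G a)) = (\<Sum>a\<in>nb G v. card (nb G v \<inter> nb G a))"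
    using fin by (simp add: card_SigmaI)
  also have "\<dots> = 2 * k3_degree G v" using k3_sum[OF sg vV] by simp
  finally have R: "card (Sigma (nb G v) (\<lambda>a. nb G v \<inter> nb G a)) = 2 * k3_degree G v" .
  show ?thesis using L R card_Un_disjoint[OF f1 f2 dis] un by simp
qed


lemma split_card:
  assumes sg: "simple_graph G" and a: "a \<in> nb G w"
  shows "card (nb G w) = 1 + card (nb G w \<inter> nb G a) + card (nb G w - nb G a - {a})"
proof -
  have eq: "nb G w = insert a ((nb G w \<inter> nb G a) \<union> (nb G w - nb G a - {a}))"
    using a nb_irr[OF sg, of a] by blast
  have fin: "finite (nb G w)" using nb_fin[OF sg] .
  have na: "a \<notin> (nb G w \<inter> nb G a) \<union> (nb G w - nb G a - {a})" using nb_irr[OF sg, of a] by blast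
  have "card (nb G w) = Suc (card ((nb G w \<inter> nb G a) \<union> (nb G w - nb G a - {a})))"
    using fin na by (subst eq) (simp add: card_insert_if)
  also have "card ((nb G w \<inter> nb G a) \<union> (nb G w - nb G a - {a})) = card (nb G w \<inter> nb G a) + card (nb G w - nb G a - {a})"
    by (rule card_Un_disjoint) (use fin in auto)
  finally show ?thesis by simp
qed

lemma half:
  assumes sg: "simple_graph G" and uv: "snd G u v"
  shows "card (Sigma (nb G u \<inter> nb G v) (\<lambda>c. nb G u - nb G c - {c}))
       + card (Sigma (nb G u \<inter> nb G v) (\<lambda>c. (nb G u - nb G v - {v}) - nb G c))
       + 2 * card (nb G u - nb G v - {v}) \<le> card (NP G u)"
proof -
  define C where "C = nb G u \<inter> nb G v"
  define Ou where "Ou = nb G u - nb G v - {v}"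
  define A1 where "A1 = Sigma C (\<lambda>c. nb G u - nb G c - {c})"
  define A2 where "A2 = Sigma C (\<lambda>c. Ou - nb G c)"
  define A2' where "A2' = (\<lambda>(x,y). (y,x)) ` A2"
  define S3 where "S3 = {v} \<times> Ou"
  define S4 where "S4 = Ou \<times> {v}"
  have vu: "v \<in> nb G u" using uv nb_iff[OF sg] by blast
  have vC: "v \<notin> C" unfolding C_def using nb_irr[OF sg, of v] by blast
  have vO: "v \<notin> Ou" unfolding Ou_def by blast
  have CO: "C \<inter> Ou = {}" unfolding C_def Ou_def by blast
  have symm: "\<And>x y. x \<in> nb G y \<longleftrightarrow> y \<in> nb G x" using nb_sym[OF sg] by blast
  have sub: "A1 \<union> A2' \<union> S3 \<union> S4 \<subseteq> NP G u"
  proof -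
    have "A1 \<subseteq> NP G u" unfolding A1_def NP_def C_def by blast
    moreover have "A2' \<subseteq> NP G u"
    proof
      fix p assume "p \<in> A2'"
      then obtain c z where cz: "(c,z) \<in> A2" and p: "p = (z,c)"
        unfolding A2'_def by auto
      then have c: "c \<in> C" and z: "z \<in> Ou" "z \<notin> nb G c" unfolding A2_def by auto
      have "c \<notin> nb G z" using z symm by blast
      moreover have "c \<noteq> z" using c z CO by blast
      ultimately show "p \<in> NP G u" using p c z unfolding NP_def C_def Ou_def by blast
    qed
    moreover have "S3 \<subseteq> NP G u" using vu unfolding S3_def NP_def Ou_def by blast
    moreover have "S4 \<subseteq> NP G u"
    proof
      fix p assume "p \<in> S4"
      then obtain x where p: "p = (x,v)" and x: "x \<in> Ou" unfolding S4_def by blast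
      have "v \<notin> nb G x" using x symm unfolding Ou_def by blast
      moreover have "v \<noteq> x" using x vO by blast
      ultimately show "p \<in> NP G u" using p x vu unfolding NP_def Ou_def by blast
    qed
    ultimately show ?thesis by blast
  qed
  have finNP: "finite (NP G u)" unfolding NP_def using nb_fin[OF sg] by auto
  have f1: "finite A1" "finite A2'" "finite S3" "finite S4"
    using sub finNP finite_subset by blast+
  have fA1: "\<forall>p\<in>A1. fst p \<in> C" unfolding A1_def by auto
  have fA2: "\<forall>p\<in>A2'. fst p \<in> Ou \<and> snd p \<in> C" unfolding A2'_def A2_def by auto
  have fS3: "\<forall>p\<in>S3. fst p = v" unfolding S3_def by auto
  have fS4: "\<forall>p\<in>S4. fst p \<in> Ou \<and> snd p = v" unfolding S4_def by auto
  have d1: "A1 \<inter> A2' = {}" using fA1 fA2 CO by (auto simp: disjoint_iff)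
  have d2: "(A1 \<union> A2') \<inter> S3 = {}" using fA1 fA2 fS3 vC vO by (auto simp: disjoint_iff)
  have d3: "(A1 \<union> A2' \<union> S3) \<inter> S4 = {}" using fA1 fA2 fS3 fS4 vC vO CO by (auto simp: disjoint_iff)
  have "card (A1 \<union> A2' \<union> S3 \<union> S4) = card A1 + card A2' + card S3 + card S4"
    using f1 d1 d2 d3 by (simp add: card_Un_disjoint)
  moreover have "card A2' = card A2"
    unfolding A2'_def by (rule card_image) (auto simp: inj_on_def)
  moreover have "card S3 = card Ou" unfolding S3_def by (simp add: card_cartesian_product)
  moreover have "card S4 = card Ou" unfolding S4_def by (simp add: card_cartesian_product)
  moreover have "card (A1 \<union> A2' \<union> S3 \<union> S4) \<le> card (NP G u)"
    using card_mono[OF finNP sub] .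
  ultimately show ?thesis unfolding A1_def A2_def C_def Ou_def by simp
qed

lemma key:
  assumes sg: "simple_graph G" and deg: "\<forall>w\<in>fst G. card (nb G w) = n"
    and NPc: "\<forall>w\<in>fst G. card (NP G w) = D" and uv: "snd G u v"
  shows "4 * card (nb G u - nb G v - {v}) + 2 * card (nb G u - nb G v - {v}) * card (nb G u \<inter> nb G v) \<le> 2 * D"
    and "n = 1 + card (nb G u \<inter> nb G v) + card (nb G u - nb G v - {v})"
proof -
  define C where "C = nb G u \<inter> nb G v"
  define Ou where "Ou = nb G u - nb G v - {v}"
  define P where "P = nb G v - nb G u - {u}"
  have uV: "u \<in> fst G" and vV: "v \<in> fst G" using sg_in[OF sg uv] by auto
  have vu: "v \<in> nb G u" using uv nb_iff[OF sg] by blast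
  have uv': "u \<in> nb G v" using vu nb_sym[OF sg] by blast
  have vu_e: "snd G v u" using sg_sym[OF sg uv] .
  have s1: "n = 1 + card C + card Ou" using split_card[OF sg vu] deg uV unfolding C_def Ou_def by simp
  then show "n = 1 + card (nb G u \<inter> nb G v) + card (nb G u - nb G v - {v})" unfolding C_def Ou_def .
  have s2: "n = 1 + card C + card P" using split_card[OF sg uv'] deg vV unfolding C_def P_def
    by (simp add: Int_commute)
  have dP: "card P = card Ou" using s1 s2 by simp
  define A1 where "A1 = Sigma C (\<lambda>c. nb G u - nb G c - {c})"
  define A2 where "A2 = Sigma C (\<lambda>c. Ou - nb G c)"
  define B1 where "B1 = Sigma C (\<lambda>c. nb G v - nb G c - {c})"
  define B2 where "B2 = Sigma C (\<lambda>c. P - nb G c)"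
  define X where "X = Sigma C (\<lambda>c. (nb G u \<union> nb G v) - nb G c - {c})"
  have hu: "card A1 + card A2 + 2 * card Ou \<le> D"
    using half[OF sg uv] NPc uV unfolding A1_def A2_def C_def Ou_def by simp
  have hv: "card B1 + card B2 + 2 * card Ou \<le> D"
    using half[OF sg vu_e] NPc vV dP unfolding B1_def B2_def C_def P_def by (simp add: Int_commute)
  have finC: "finite C" unfolding C_def using nb_fin[OF sg] by auto
  have finX: "finite X" unfolding X_def using finC nb_fin[OF sg] by auto
  have finA: "finite A1" "finite A2" "finite B1" "finite B2"
    unfolding A1_def A2_def B1_def B2_def Ou_def P_def using finC nb_fin[OF sg] by auto
  have X1: "X \<subseteq> A2 \<union> B1"
  proof
    fix p assume "p \<in> X"
    then obtain c z where p: "p = (c,z)" and c: "c \<in> C" and z: "z \<in> nb G u \<union> nb G v" "z \<notin> nb G c" "z \<noteq> c"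
      unfolding X_def by blast
    have "v \<in> nb G c" using c nb_sym[OF sg] unfolding C_def by blast
    then have "z \<noteq> v" using z by blast
    then show "p \<in> A2 \<union> B1" using p c z unfolding A2_def B1_def Ou_def by blast
  qed
  have X2: "X \<subseteq> A1 \<union> B2"
  proof
    fix p assume "p \<in> X"
    then obtain c z where p: "p = (c,z)" and c: "c \<in> C" and z: "z \<in> nb G u \<union> nb G v" "z \<notin> nb G c" "z \<noteq> c"
      unfolding X_def by blast
    have "u \<in> nb G c" using c nb_sym[OF sg] unfolding C_def by blast
    then have "z \<noteq> u" using z by blast
    then show "p \<in> A1 \<union> B2" using p c z unfolding A1_def B2_def P_def by blast
  qed
  have cX1: "card X \<le> card A2 + card B1"
    using card_mono[OF _ X1] finA card_Un_le[of A2 B1] by simp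
  have cX2: "card X \<le> card A1 + card B2"
    using card_mono[OF _ X2] finA card_Un_le[of A1 B2] by simp
  have fib: "card Ou \<le> card ((nb G u \<union> nb G v) - nb G c - {c})" if c: "c \<in> C" for c
  proof -
    have cV: "c \<in> fst G" using c nb_sub[of G u] unfolding C_def by blast
    have "card (nb G u \<union> nb G v) + card (nb G u \<inter> nb G v) = card (nb G u) + card (nb G v)"
      using card_Un_Int[OF nb_fin[OF sg] nb_fin[OF sg]] by simp
    then have U: "card (nb G u \<union> nb G v) = n + 1 + card Ou" using s1 deg uV vV unfolding C_def by simp
    have I: "card (insert c (nb G c)) = n + 1" using nb_irr[OF sg, of c] nb_fin[OF sg, of c] deg cV by simp
    have "card (nb G u \<union> nb G v) - card (insert c (nb G c)) \<le> card ((nb G u \<union> nb G v) - insert c (nb G c))"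
      by (rule diff_card_le_card_Diff) (use nb_fin[OF sg, of c] in simp)
    moreover have "(nb G u \<union> nb G v) - insert c (nb G c) = (nb G u \<union> nb G v) - nb G c - {c}" by blast
    ultimately show ?thesis using U I by simp
  qed
  have "card Ou * card C \<le> card X"
  proof -
    have "card X = (\<Sum>c\<in>C. card ((nb G u \<union> nb G v) - nb G c - {c}))"
      unfolding X_def using finC nb_fin[OF sg] by (simp add: card_SigmaI)
    moreover have "(\<Sum>c\<in>C. card Ou) \<le> (\<Sum>c\<in>C. card ((nb G u \<union> nb G v) - nb G c - {c}))"
      using fib by (rule sum_mono)
    ultimately show ?thesis by (simp add: mult.commute)
  qed
  then show "4 * card (nb G u - nb G v - {v}) + 2 * card (nb G u - nb G v - {v}) * card (nb G u \<inter> nb G v) \<le> 2 * D"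
    using hu hv cX1 cX2 unfolding Ou_def[symmetric] C_def[symmetric] by linarith
qed


lemma big:
  assumes sg: "simple_graph G" and deg: "\<forall>w\<in>fst G. card (nb G w) = n"
    and NPc: "\<forall>w\<in>fst G. card (NP G w) = D" and uv: "snd G u v"
    and d2: "2 \<le> card (nb G u - nb G v - {v})"
  shows "2 * n \<le> D + 2"
proof -
  define d where "d = card (nb G u - nb G v - {v})"
  define c where "c = card (nb G u \<inter> nb G v)"
  have k1: "4 * d + 2 * d * c \<le> 2 * D" using key(1)[OF sg deg NPc uv] unfolding d_def c_def .
  have k2: "n = 1 + c + d" using key(2)[OF sg deg NPc uv] unfolding d_def c_def .
  have "2 * c \<le> d * c" using d2 unfolding d_def[symmetric] by simp
  then show ?thesis using k1 k2 by linarith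
qed

lemma no_graph:
  assumes sg: "simple_graph G" and vV: "v \<in> fst G" and deg: "\<forall>w\<in>fst G. card (nb G w) = n"
    and NPc: "\<forall>w\<in>fst G. card (NP G w) = D" and n2: "n \<ge> 2"
    and gap: "(0 < D \<and> D < n) \<or> (n < D \<and> D + 2 < 2 * n)"
  shows False
proof -
  have symm: "\<And>x y. x \<in> nb G y \<longleftrightarrow> y \<in> nb G x" using nb_sym[OF sg] by blast
  have fin: "\<And>x. finite (nb G x)" using nb_fin[OF sg] .
  have Dsum: "D = (\<Sum>a\<in>nb G v. card (nb G v - nb G a - {a}))"
    using NP_sum[OF sg, of v] NPc vV by simp
  have nv: "card (nb G v) = n" using deg vV by simp
  have edge: "\<And>a. a \<in> nb G v \<Longrightarrow> snd G v a" using nb_iff[OF sg] by blast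
  show False
  proof (cases "n < D")
    case True
    have "\<exists>a\<in>nb G v. 2 \<le> card (nb G v - nb G a - {a})"
    proof (rule ccontr)
      assume "\<not> ?thesis"
      then have h1: "\<forall>a\<in>nb G v. card (nb G v - nb G a - {a}) \<le> 1" by auto
      have "(\<Sum>a\<in>nb G v. card (nb G v - nb G a - {a})) \<le> (\<Sum>a\<in>nb G v. (1::nat))"
        by (rule sum_mono) (use h1 in blast)
      then have "D \<le> (\<Sum>a\<in>nb G v. 1)" unfolding Dsum by simp
      then show False using True nv by simp
    qed
    then obtain a where a: "a \<in> nb G v" "2 \<le> card (nb G v - nb G a - {a})" by blast
    have "2 * n \<le> D + 2" using big[OF sg deg NPc edge[OF a(1)] a(2)] .
    then show False using gap True by linarith
  next
    case False
    then have D0: "0 < D" "D < n" using gap by auto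
    have "\<exists>a\<in>nb G v. 1 \<le> card (nb G v - nb G a - {a})"
    proof (rule ccontr)
      assume "\<not> ?thesis"
      then have "\<forall>a\<in>nb G v. card (nb G v - nb G a - {a}) = 0" by auto
      then have "D = 0" unfolding Dsum by simp
      then show False using D0 by simp
    qed
    then obtain a where a: "a \<in> nb G v" "1 \<le> card (nb G v - nb G a - {a})" by blast
    define I where "I = {i \<in> nb G v. card (nb G v - nb G i - {i}) = 0}"
    have "(\<Sum>a\<in>nb G v - I. 1) \<le> (\<Sum>a\<in>nb G v - I. card (nb G v - nb G a - {a}))"
      by (rule sum_mono) (auto simp: I_def)
    also have "\<dots> \<le> D" unfolding Dsum by (rule sum_mono2) (use fin in auto)
    finally have "card (nb G v - I) \<le> D" by simp
    then have "I \<noteq> {}" using D0 nv by auto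
    then obtain i where i: "i \<in> I" by blast
    have iv: "i \<in> nb G v" and iemp: "nb G v - nb G i - {i} = {}"
      using i fin unfolding I_def by auto
    have ia: "i \<noteq> a" using i a unfolding I_def by auto
    have ai: "a \<in> nb G i" using iemp a ia by blast
    have iaa: "i \<in> nb G a" using ai symm by blast
    have iV: "i \<in> fst G" using iv nb_sub[of G v] by blast
    have sub_i: "insert v (nb G v - {i}) \<subseteq> nb G i" using iemp iv symm by blast
    have "card (insert v (nb G v - {i})) = n"
      using nb_irr[OF sg, of v] fin[of v] iv nv n2 by (simp add: card_insert_if)
    then have nbi: "nb G i = insert v (nb G v - {i})"
      using card_subset_eq[OF fin sub_i] deg iV by simp
    have aV: "a \<in> fst G" using a(1) nb_sub[of G v] by blast
    have va: "v \<in> nb G a" using a(1) symm by blast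
    have sa: "card (nb G a) = 1 + card (nb G a \<inter> nb G v) + card (nb G a - nb G v - {v})"
      using split_card[OF sg va] .
    have sv: "card (nb G v) = 1 + card (nb G v \<inter> nb G a) + card (nb G v - nb G a - {a})"
      using split_card[OF sg a(1)] .
    have "card (nb G a - nb G v - {v}) \<ge> 1" using sa sv a(2) deg aV vV by (simp add: Int_commute)
    then obtain x where x: "x \<in> nb G a - nb G v - {v}"
      by (metis card.empty ex_in_conv not_one_le_zero)
    have ax: "snd G a x" using x nb_iff[OF sg] by blast
    have "{v, i} \<subseteq> nb G a - nb G x - {x}"
    proof -
      have "v \<in> nb G a - nb G x - {x}" using va x symm by blast
      moreover have "i \<notin> nb G x"
      proof
        assume "i \<in> nb G x"
        then have "x \<in> nb G i" using symm by blast
        then show False using nbi x by blast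
      qed
      moreover have "i \<noteq> x" using iv x by blast
      ultimately show ?thesis using iaa by blast
    qed
    moreover have "v \<noteq> i" using iv nb_irr[OF sg, of v] by blast
    ultimately have "2 \<le> card (nb G a - nb G x - {x})"
      using card_mono[OF _ \<open>{v, i} \<subseteq> _\<close>] fin[of a] by fastforce
    then have "2 * n \<le> D + 2" using big[OF sg deg NPc ax] by blast
    then show False using D0 n2 by linarith
  qed
qed

lemma two_choose: "2 * (n choose 2) = n * (n - 1)"
proof (induct n)
  case (Suc n)
  then show ?case by (cases n) (auto simp: numeral_2_eq_2)
qed simp

lemma params_via:
  assumes sg: "simple_graph G"
    and h: "\<And>v. v \<in> fst G \<Longrightarrow> card (nb G v) = r2 \<and> (\<Sum>a\<in>nb G v. card (nb G v \<inter> nb G a)) = 2 * r3"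
  shows "has_params G r2 r3"
  unfolding has_params_def
proof
  fix v assume v: "v \<in> fst G"
  show "degree G v = r2 \<and> k3_degree G v = r3"
    using h[OF v] k3_sum[OF sg v] degree_nb[of G v] by simp
qed

lemma sg_complete: "simple_graph (complete_graph m)"
  unfolding simple_graph_def complete_graph_def by auto

lemma nb_complete: "v < m \<Longrightarrow> nb (complete_graph m) v = {0..<m} - {v}"
  unfolding nb_def complete_graph_def by auto

lemma ex_complete: "has_params (complete_graph (n + 1)) n (n choose 2)"
proof (rule params_via[OF sg_complete])
  fix v assume v: "v \<in> fst (complete_graph (n + 1))"
  then have vl: "v < n + 1" by (simp add: complete_graph_def)
  have c1: "card (nb (complete_graph (n + 1)) v) = n" using vl by (simp add: nb_complete)
  have "(\<Sum>a\<in>nb (complete_graph (n + 1)) v. card (nb (complete_graph (n + 1)) v \<inter> nb (complete_graph (n + 1)) a))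
      = (\<Sum>a\<in>nb (complete_graph (n + 1)) v. n - 1)"
  proof (rule sum.cong)
    fix a assume a: "a \<in> nb (complete_graph (n + 1)) v"
    then have al: "a < n + 1" "a \<noteq> v" using vl by (auto simp: nb_complete)
    have "nb (complete_graph (n + 1)) v \<inter> nb (complete_graph (n + 1)) a = {0..<n+1} - {v, a}"
      using vl al by (auto simp: nb_complete)
    then show "card (nb (complete_graph (n + 1)) v \<inter> nb (complete_graph (n + 1)) a) = n - 1"
      using al vl by (simp add: card_Diff_subset)
  qed simp
  also have "\<dots> = n * (n - 1)" using c1 by simp
  also have "\<dots> = 2 * (n choose 2)" using two_choose[of n] by simp
  finally show "card (nb (complete_graph (n + 1)) v) = n \<and> (\<Sum>a\<in>nb (complete_graph (n + 1)) v. card (nb (complete_graph (n + 1)) v \<inter> nb (complete_graph (n + 1)) a)) = 2 * (n choose 2)"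
    using c1 by simp
qed

lemma sg_turan: "simple_graph (turan m r)"
  unfolding simple_graph_def turan_def by auto

lemma cls:
  fixes r c :: nat
  assumes "c < r"
  shows "{u \<in> {0..<2*r}. u mod r = c} = {c, c + r}"
proof
  show "{u \<in> {0..<2*r}. u mod r = c} \<subseteq> {c, c + r}"
  proof
    fix u assume u: "u \<in> {u \<in> {0..<2*r}. u mod r = c}"
    then have ul: "u < 2 * r" and um: "u mod r = c" by auto
    show "u \<in> {c, c + r}"
    proof (cases "u < r")
      case True then show ?thesis using um by simp
    next
      case False
      then have "u mod r = u - r" using ul by (simp add: le_mod_geq)
      then show ?thesis using um False by simp
    qed
  qed
  show "{c, c + r} \<subseteq> {u \<in> {0..<2*r}. u mod r = c}" using assms by auto
qed

lemma nb_turan: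
  assumes r: "0 < r" and v: "v < 2*r"
  shows "nb (turan (2*r) r) v = {0..<2*r} - {v mod r, v mod r + r}"
proof -
  have "nb (turan (2*r) r) v = {0..<2*r} - {u \<in> {0..<2*r}. u mod r = v mod r}"
    unfolding nb_def turan_def using v by auto
  also have "\<dots> = {0..<2*r} - {v mod r, v mod r + r}" using cls[of "v mod r" r] r by simp
  finally show ?thesis .
qed

lemma card4: "(x::nat) < r \<Longrightarrow> y < r \<Longrightarrow> x \<noteq> y \<Longrightarrow> card {x, x + r, y, y + r} = 4"
  by (auto simp: card_insert_if)

lemma sub4: "(x::nat) < r \<Longrightarrow> y < r \<Longrightarrow> {x, x + r, y, y + r} \<subseteq> {0..<2*r}"
  by auto

lemma ex_turan_gen:
  assumes r: "2 \<le> r"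
  shows "has_params (turan (2*r) r) (2*r - 2) ((2*r - 2) * (2*r - 4) div 2)"
proof (rule params_via[OF sg_turan])
  fix v assume v: "v \<in> fst (turan (2*r) r)"
  let ?N = "nb (turan (2*r) r)"
  have r0: "0 < r" using r by simp
  have vl: "v < 2*r" using v by (simp add: turan_def)
  have vm: "v mod r < r" using r0 by simp
  have c1: "card (?N v) = 2*r - 2"
  proof -
    have "card {v mod r, v mod r + r} = 2" using r0 by simp
    moreover have "{v mod r, v mod r + r} \<subseteq> {0..<2*r}" using vm by auto
    ultimately show ?thesis using r0 vl by (simp add: nb_turan card_Diff_subset)
  qed
  have "(\<Sum>a\<in>?N v. card (?N v \<inter> ?N a)) = (\<Sum>a\<in>?N v. 2*r - 4)"
  proof (rule sum.cong)
    fix a assume a: "a \<in> ?N v"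
    have ne: "a mod r \<noteq> v mod r"
    proof
      assume "a mod r = v mod r"
      moreover have "a < 2 * r" using a r0 vl by (simp add: nb_turan)
      ultimately have "a \<in> {u \<in> {0..<2*r}. u mod r = v mod r}" by simp
      then have "a \<in> {v mod r, v mod r + r}" using cls[of "v mod r" r] r0 by (metis mod_less_divisor)
      then show False using a r0 vl by (simp add: nb_turan)
    qed
    have al: "a < 2*r" using a r0 vl by (simp add: nb_turan)
    have am: "a mod r < r" using r0 by simp
    have "?N v \<inter> ?N a = {0..<2*r} - {v mod r, v mod r + r, a mod r, a mod r + r}"
      using r0 vl al by (auto simp: nb_turan)
    moreover have "card {v mod r, v mod r + r, a mod r, a mod r + r} = 4"
      using card4[OF vm am] ne by simp
    moreover have "{v mod r, v mod r + r, a mod r, a mod r + r} \<subseteq> {0..<2*r}"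
      using sub4[OF vm am] .
    ultimately show "card (?N v \<inter> ?N a) = 2*r - 4" by (simp add: card_Diff_subset)
  qed simp
  also have "\<dots> = (2*r - 2) * (2*r - 4)" using c1 by simp
  finally show "card (?N v) = 2*r - 2 \<and> (\<Sum>a\<in>?N v. card (?N v \<inter> ?N a)) = 2 * ((2*r - 2) * (2*r - 4) div 2)"
    using c1 by simp
qed


lemma cart_adj: "snd (cart_prod (complete_graph n) (complete_graph 2)) (a,b) (a',b') \<longleftrightarrow>
   a < n \<and> a' < n \<and> b < 2 \<and> b' < 2 \<and> ((a = a' \<and> b \<noteq> b') \<or> (b = b' \<and> a \<noteq> a'))"
  unfolding cart_prod_def complete_graph_def by auto

lemma cart_V: "fst (cart_prod (complete_graph n) (complete_graph 2)) = {0..<n} \<times> {0..<2}"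
  unfolding cart_prod_def complete_graph_def by auto

lemma sg_cart: "simple_graph (cart_prod (complete_graph n) (complete_graph 2))"
proof -
  let ?G = "cart_prod (complete_graph n) (complete_graph 2)"
  have 1: "finite (fst ?G)" by (simp add: cart_V)
  have 2: "\<forall>u v. snd ?G u v \<longrightarrow> u \<in> fst ?G \<and> v \<in> fst ?G"
    by (auto simp: cart_adj cart_V)
  have 3: "\<forall>u v. snd ?G u v \<longrightarrow> snd ?G v u"
    by (auto simp: cart_adj)
  have 4: "\<forall>v. \<not> snd ?G v v" by (auto simp: cart_adj)
  show ?thesis unfolding simple_graph_def using 1 2 3 4 by blast
qed

lemma nb_cart:
  assumes "a < n" "b < 2"
  shows "nb (cart_prod (complete_graph n) (complete_graph 2)) (a,b) = insert (a, 1 - b) (({0..<n} - {a}) \<times> {b})"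
proof -
  have "b = 0 \<or> b = 1" using assms by auto
  then show ?thesis using assms unfolding nb_def cart_V by (auto simp: cart_adj)
qed

lemma ex_cart:
  assumes n1: "1 \<le> n"
  shows "has_params (cart_prod (complete_graph n) (complete_graph 2)) n ((n - 1) choose 2)"
proof (rule params_via[OF sg_cart])
  fix v assume v: "v \<in> fst (cart_prod (complete_graph n) (complete_graph 2))"
  let ?N = "nb (cart_prod (complete_graph n) (complete_graph 2))"
  obtain a b where ab: "v = (a,b)" "a < n" "b < 2" using v by (cases v) (auto simp: cart_V)
  have b01: "b = 0 \<or> b = 1" using ab by auto
  have notin: "(a, 1 - b) \<notin> ({0..<n} - {a}) \<times> {b}" using ab by auto
  have c1: "card (?N v) = n"
    using ab notin n1 by (simp add: nb_cart card_cartesian_product)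
  have z: "?N v \<inter> ?N (a, 1 - b) = {}"
    using ab b01 by (auto simp: nb_cart)
  have o: "card (?N v \<inter> ?N p) = n - 2" if p: "p \<in> ({0..<n} - {a}) \<times> {b}" for p
  proof -
    obtain a' where p': "p = (a', b)" "a' < n" "a' \<noteq> a"
      using p by (cases p) (simp add: mem_Times_iff)
    have "?N v \<inter> ?N p = ({0..<n} - {a, a'}) \<times> {b}"
      using ab p' b01 by (auto simp: nb_cart)
    then show ?thesis using p' ab by (simp add: card_cartesian_product card_Diff_subset)
  qed
  have "(\<Sum>p\<in>?N v. card (?N v \<inter> ?N p)) = card (?N v \<inter> ?N (a, 1 - b)) + (\<Sum>p\<in>({0..<n} - {a}) \<times> {b}. card (?N v \<inter> ?N p))"
    using ab notin by (simp add: nb_cart)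
  also have "\<dots> = (\<Sum>p\<in>({0..<n} - {a}) \<times> {b}. n - 2)"
    using z o by simp
  also have "\<dots> = (n - 1) * (n - 2)" using ab by (simp add: card_cartesian_product)
  also have "\<dots> = 2 * ((n - 1) choose 2)" using two_choose[of "n - 1"] by (simp add: numeral_2_eq_2)
  finally show "card (?N v) = n \<and> (\<Sum>p\<in>?N v. card (?N v \<inter> ?N p)) = 2 * ((n - 1) choose 2)"
    using c1 by simp
qed


lemma arith_gap:
  fixes k r3 D :: nat
  assumes k2: "k \<ge> 2" and DE: "D + 2*r3 = 2*k*(2*k-1)"
    and g: "(4 * (2*k div 2 choose 2) < r3 \<and> r3 < 2*k choose 2) \<or>
            ((2*k - 1) choose 2 < r3 \<and> r3 < 4 * (2*k div 2 choose 2))"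
  shows "(0 < D \<and> D < 2*k) \<or> (2*k < D \<and> D + 2 < 2*(2*k))"
proof -
  obtain j where j: "k = j + 1" using k2 by (metis add.commute add_diff_inverse_nat le_add1 less_le_trans nat_less_le not_less_eq_eq one_add_one plus_1_eq_Suc)
  have a1: "2 * (k choose 2) = (j+1)*j" using two_choose[of k] j by simp
  have a2: "2 * ((2*k) choose 2) = (2*j+2)*(2*j+1)" using two_choose[of "2*k"] j by simp
  have a3: "2 * ((2*k-1) choose 2) = (2*j+1)*(2*j)" using two_choose[of "2*k-1"] j by simp
  have DE': "D + 2*r3 = (2*j+2)*(2*j+1)" using DE j by simp
  have kk: "2*k div 2 = k" by simp
  show ?thesis using g DE' a1 a2 a3 j unfolding kk by (simp add: algebra_simps) linarith
qed


theorem corollary5p1: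
  fixes r2 r3 :: nat
  assumes "even r2" and "r2 \<ge> 4"
  shows "(\<forall>G :: 'a graph. simple_graph G \<and> fst G \<noteq> {} \<and>
            ((4 * (r2 div 2 choose 2) < r3 \<and> r3 < r2 choose 2) \<or>
             ((r2 - 1) choose 2 < r3 \<and> r3 < 4 * (r2 div 2 choose 2)))
            \<longrightarrow> \<not> has_params G r2 r3)
       \<and> has_params (complete_graph (r2 + 1)) r2 (r2 choose 2)
       \<and> has_params (turan (r2 + 2) (r2 div 2 + 1)) r2 (4 * (r2 div 2 choose 2))
       \<and> has_params (cart_prod (complete_graph r2) (complete_graph 2)) r2 ((r2 - 1) choose 2)"
proof -
  obtain k where k: "r2 = 2 * k" using assms(1) by (elim evenE)
  have k2: "k \<ge> 2" using assms(2) k by simp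
  have P1: "\<forall>G :: 'a graph. simple_graph G \<and> fst G \<noteq> {} \<and>
            ((4 * (r2 div 2 choose 2) < r3 \<and> r3 < r2 choose 2) \<or>
             ((r2 - 1) choose 2 < r3 \<and> r3 < 4 * (r2 div 2 choose 2)))
            \<longrightarrow> \<not> has_params G r2 r3"
  proof (intro allI impI)
    fix G :: "'a graph"
    assume h: "simple_graph G \<and> fst G \<noteq> {} \<and>
            ((4 * (r2 div 2 choose 2) < r3 \<and> r3 < r2 choose 2) \<or>
             ((r2 - 1) choose 2 < r3 \<and> r3 < 4 * (r2 div 2 choose 2)))"
    then have sg: "simple_graph G" and ne: "fst G \<noteq> {}"
      and g: "(4 * (r2 div 2 choose 2) < r3 \<and> r3 < r2 choose 2) \<or>
             ((r2 - 1) choose 2 < r3 \<and> r3 < 4 * (r2 div 2 choose 2))" by auto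
    show "\<not> has_params G r2 r3"
    proof
      assume hp: "has_params G r2 r3"
      obtain v where vV: "v \<in> fst G" using ne by blast
      have deg: "\<forall>w\<in>fst G. card (nb G w) = r2"
        using hp unfolding has_params_def by (simp add: degree_nb)
      have k3: "\<forall>w\<in>fst G. k3_degree G w = r3"
        using hp unfolding has_params_def by simp
      define D where "D = r2 * (r2 - 1) - 2 * r3"
      have NPe: "\<forall>w\<in>fst G. card (NP G w) + 2 * r3 = r2 * (r2 - 1)"
        using NP_card[OF sg] deg k3 by simp
      have NPc: "\<forall>w\<in>fst G. card (NP G w) = D"
        using NPe unfolding D_def by (metis add_diff_cancel_right')
      have DE: "D + 2 * r3 = 2 * k * (2 * k - 1)"
        using NPe NPc vV k by force
      have gap: "(0 < D \<and> D < 2*k) \<or> (2*k < D \<and> D + 2 < 2*(2*k))"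
        using arith_gap[OF k2 DE] g unfolding k by simp
      show False
        using no_graph[OF sg vV deg NPc] gap k k2 by simp
    qed
  qed
  have P2: "has_params (complete_graph (r2 + 1)) r2 (r2 choose 2)" by (rule ex_complete)
  have P3: "has_params (turan (r2 + 2) (r2 div 2 + 1)) r2 (4 * (r2 div 2 choose 2))"
  proof -
    have e1: "r2 + 2 = 2 * (k + 1)" "r2 div 2 + 1 = k + 1" "2 * (k + 1) - 2 = r2" using k by auto
    have t: "2 * (k choose 2) = k * (k - 1)" by (rule two_choose)
    have a: "2 * (k + 1) - 2 = 2 * k" by simp
    have b: "2 * (k + 1) - 4 = 2 * (k - 1)" using k2 by simp
    have "(2 * (k + 1) - 2) * (2 * (k + 1) - 4) = 4 * (k * (k - 1))" unfolding a b by simp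
    also have "\<dots> = 2 * (4 * (k choose 2))" using t by simp
    finally have e2: "(2 * (k + 1) - 2) * (2 * (k + 1) - 4) div 2 = 4 * (r2 div 2 choose 2)"
      using k by simp
    have H: "has_params (turan (2*(k+1)) (k+1)) (2*(k+1)-2) ((2*(k+1)-2)*(2*(k+1)-4) div 2)"
      by (rule ex_turan_gen) (use k2 in simp)
    have H2: "has_params (turan (2*(k+1)) (k+1)) r2 (4 * (r2 div 2 choose 2))"
      using H[unfolded e2, unfolded e1(3)] .
    show ?thesis unfolding e1(1) e1(2) by (rule H2)
  qed
  have P4: "has_params (cart_prod (complete_graph r2) (complete_graph 2)) r2 ((r2 - 1) choose 2)"
    using ex_cart assms(2) by simp
  show ?thesis using P1 P2 P3 P4 by blast
qed

end
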